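(* Let $d, N, r$ be positive integers, let $\|\cdot\|$ be any norm on $\mathbb{R}^d$ with unit ball $B = \{v \in \mathbb{R}^d : \|v\| \le 1\}$, and let $V_1, \dots, V_N$ be finite subsets of $B$ with $|V_i| \ge r$ for all $i \in [N]$. Then there is an $r$-selection $\chi$ of $(V_i)_{i\in[N]}$ with \[ \max_{n \in [N]} \max_{\ell \in [r]} \Big\| \sum_{i \in [n]} \Big( \chi(i,\ell) - \frac{1}{|V_i|} \sum_{v \in V_i} v \Big) \Big\| \le 5d. \]
   Context: $[n] = \{1, \dots, n\}$. An $r$-selection of $(V_i)_{i \in [N]}$ is a mapping $\chi : [N] \times [r] \to \mathbb{R}^d$ such that for every $i \in [N]$ the set $\chi(i,[r]) = \{\chi(i,\ell) : \ell \in [r]\}$ is an $r$-element subset of $V_i$ (so $\chi(i,1),\dots,\chi(i,r)$ are $r$ distinct elements of $V_i$). *)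

theory Defs
  imports "HOL-Analysis.Analysis"
begin

definition is_norm :: "('a::real_vector \<Rightarrow> real) \<Rightarrow> bool" where
  "is_norm nrm \<longleftrightarrow>
     (\<forall>x. 0 \<le> nrm x) \<and> (\<forall>x. nrm x = 0 \<longleftrightarrow> x = 0) \<and>
     (\<forall>c x. nrm (c *\<^sub>R x) = \<bar>c\<bar> * nrm x) \<and>
     (\<forall>x y. nrm (x + y) \<le> nrm x + nrm y)"

definition r_selection ::
    "nat \<Rightarrow> nat \<Rightarrow> (nat \<Rightarrow> 'a set) \<Rightarrow> (nat \<Rightarrow> nat \<Rightarrow> 'a) \<Rightarrow> bool" where
  "r_selection N r V chi \<longleftrightarrow>
     (\<forall>i\<in>{1..N}. inj_on (chi i) {1..r} \<and> chi i ` {1..r} \<subseteq> V i)"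

end

theory Submission
  imports Defs
begin


lemma dep_family:
  fixes w :: "'i \<Rightarrow> real ^ 'd"
  assumes "finite Q" "card Q > CARD('d)"
  shows "\<exists>lam. (\<exists>j\<in>Q. lam j \<noteq> 0) \<and> (\<Sum>j\<in>Q. lam j *\<^sub>R w j) = 0"
proof (cases "inj_on w Q")
  case True
  have "card (w ` Q) > DIM(real ^ 'd)" using assms True by (simp add: card_image)
  hence "dependent (w ` Q)" using independent_bound by (metis not_le)
  then obtain u where u: "\<exists>v\<in>w ` Q. u v \<noteq> 0" "(\<Sum>v\<in>w ` Q. u v *\<^sub>R v) = 0"
    using dependent_finite[of "w ` Q"] assms(1) by auto
  have "(\<Sum>j\<in>Q. u (w j) *\<^sub>R w j) = 0" using u(2) True by (simp add: sum.reindex)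
  then show ?thesis using u(1) by (intro exI[of _ "\<lambda>j. u (w j)"]) auto
next
  case False
  then obtain j k where jk: "j \<in> Q" "k \<in> Q" "j \<noteq> k" "w j = w k" unfolding inj_on_def by blast
  define lam where "lam = (\<lambda>t. (if t = j then 1 else 0) - (if t = k then 1 else (0::real)))"
  have "(\<Sum>t\<in>Q. lam t *\<^sub>R w t) = (\<Sum>t\<in>Q. (if t = j then w t else 0)) - (\<Sum>t\<in>Q. (if t = k then w t else 0))"
  proof -
    have "\<And>t. lam t *\<^sub>R w t = (if t = j then w t else 0) - (if t = k then w t else 0)"
      using jk(3) by (simp add: lam_def)
    then show ?thesis by (simp add: sum_subtractf)
  qed
  also have "\<dots> = 0" using jk assms(1) by (simp add: sum.delta)
  finally show ?thesis using jk by (intro exI[of _ lam]) (auto simp: lam_def)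
qed

lemma nrm_props:
  assumes "is_norm nrm"
  shows "nrm 0 = 0" "\<And>x. nrm (- x) = nrm x" "\<And>c x. nrm (c *\<^sub>R x) = \<bar>c\<bar> * nrm x"
    "\<And>x y. nrm (x + y) \<le> nrm x + nrm y" "\<And>x. nrm x \<ge> 0"
proof -
  show "nrm 0 = 0" using assms unfolding is_norm_def by blast
  show sc: "\<And>c x. nrm (c *\<^sub>R x) = \<bar>c\<bar> * nrm x" using assms unfolding is_norm_def by blast
  show "\<And>x. nrm (- x) = nrm x" using sc[of "-1"] by simp
  show "\<And>x y. nrm (x + y) \<le> nrm x + nrm y" "\<And>x. nrm x \<ge> 0" using assms unfolding is_norm_def by blast+
qed

lemma nrm_sum:
  assumes "is_norm nrm"
  shows "nrm (\<Sum>j\<in>S. f j) \<le> (\<Sum>j\<in>S. nrm (f j))"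
proof (induction S rule: infinite_finite_induct)
  case (infinite A) then show ?case using nrm_props[OF assms] by simp
next
  case empty then show ?case using nrm_props[OF assms] by simp
next
  case (insert x F)
  then show ?case using nrm_props(4)[OF assms, of "f x" "sum f F"] by simp
qed



lemma direction:
  fixes Fr :: "(nat \<times> (real ^ 'd)) set"
  assumes fin: "finite Fr" and big: "card Fr > card (fst ` Fr) + CARD('d)"
  shows "\<exists>c. (\<forall>j. j \<notin> Fr \<longrightarrow> c j = 0) \<and> (\<forall>i. (\<Sum>j\<in>{j\<in>Fr. fst j = i}. c j) = 0)
    \<and> (\<Sum>j\<in>Fr. c j *\<^sub>R snd j) = 0 \<and> (\<exists>j\<in>Fr. c j \<noteq> 0)"
proof -
  define ref where "ref i = (SOME j. j \<in> Fr \<and> fst j = i)" for i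
  have ref: "ref i \<in> Fr \<and> fst (ref i) = i" if "i \<in> fst ` Fr" for i
  proof -
    have "\<exists>j. j \<in> Fr \<and> fst j = i" using that by auto
    then show ?thesis unfolding ref_def by (rule someI_ex)
  qed
  define Rf where "Rf = ref ` (fst ` Fr)"
  have injr: "inj_on ref (fst ` Fr)" using ref by (metis inj_onI)
  have cRf: "card Rf = card (fst ` Fr)" unfolding Rf_def using injr by (simp add: card_image)
  have RfF: "Rf \<subseteq> Fr" unfolding Rf_def using ref by blast
  define Q where "Q = Fr - Rf"
  have finQ: "finite Q" using fin unfolding Q_def by auto
  have cQ: "card Q = card Fr - card Rf" unfolding Q_def using RfF fin by (simp add: card_Diff_subset finite_subset)
  have cQ2: "card Q > CARD('d)" using cQ cRf big by linarith
  define w where "w j = snd j - snd (ref (fst j))" for j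
  obtain lam where lam: "\<exists>j\<in>Q. lam j \<noteq> 0" "(\<Sum>j\<in>Q. lam j *\<^sub>R w j) = 0"
    using dep_family[OF finQ cQ2, of w] by blast
  define c where "c j = (if j \<in> Q then lam j else if j \<in> Rf then - (\<Sum>q\<in>{q\<in>Q. fst q = fst j}. lam q) else 0)" for j
  have c1: "\<forall>j. j \<notin> Fr \<longrightarrow> c j = 0" unfolding c_def Q_def using RfF by auto
  have c2: "(\<Sum>j\<in>{j\<in>Fr. fst j = i}. c j) = 0" for i
  proof -
    have split: "{j\<in>Fr. fst j = i} = {q\<in>Q. fst q = i} \<union> {j\<in>Rf. fst j = i}" unfolding Q_def using RfF by auto
    have disj: "{q\<in>Q. fst q = i} \<inter> {j\<in>Rf. fst j = i} = {}" unfolding Q_def by auto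
    have fins: "finite {q\<in>Q. fst q = i}" "finite {j\<in>Rf. fst j = i}" using finQ fin RfF by (auto intro: finite_subset[of _ Fr])
    have s1: "(\<Sum>j\<in>{q\<in>Q. fst q = i}. c j) = (\<Sum>j\<in>{q\<in>Q. fst q = i}. lam j)" unfolding c_def by simp
    show ?thesis
    proof (cases "i \<in> fst ` Fr")
      case True
      have "{j\<in>Rf. fst j = i} = {ref i}"
      proof
        show "{j\<in>Rf. fst j = i} \<subseteq> {ref i}"
        proof
          fix j assume "j \<in> {j\<in>Rf. fst j = i}"
          then obtain i' where "i' \<in> fst ` Fr" "j = ref i'" "fst j = i" unfolding Rf_def by blast
          then show "j \<in> {ref i}" using ref[of i'] by simp
        qed
        show "{ref i} \<subseteq> {j\<in>Rf. fst j = i}" unfolding Rf_def using ref[OF True] True by blast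
      qed
      moreover have "c (ref i) = - (\<Sum>q\<in>{q\<in>Q. fst q = i}. lam q)"
        using ref[OF True] unfolding c_def Q_def Rf_def using True by auto
      moreover have "(\<Sum>j\<in>{j\<in>Fr. fst j = i}. c j) = (\<Sum>j\<in>{q\<in>Q. fst q = i}. c j) + (\<Sum>j\<in>{j\<in>Rf. fst j = i}. c j)"
        unfolding split by (rule sum.union_disjoint[OF fins disj])
      ultimately show ?thesis using s1 by simp
    next
      case False
      then have "{j\<in>Fr. fst j = i} = {}" by force
      then show ?thesis by (metis sum.empty)
    qed
  qed
  have c3: "(\<Sum>j\<in>Fr. c j *\<^sub>R snd j) = 0"
  proof -
    have FU: "Fr = Q \<union> Rf" "Q \<inter> Rf = {}" unfolding Q_def using RfF by auto
    have finR: "finite Rf" using RfF fin finite_subset by auto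
    have "(\<Sum>j\<in>Fr. c j *\<^sub>R snd j) = (\<Sum>j\<in>Q. c j *\<^sub>R snd j) + (\<Sum>j\<in>Rf. c j *\<^sub>R snd j)"
      unfolding FU(1) by (rule sum.union_disjoint[OF finQ finR FU(2)])
    also have "(\<Sum>j\<in>Q. c j *\<^sub>R snd j) = (\<Sum>j\<in>Q. lam j *\<^sub>R snd j)" unfolding c_def by simp
    also have "(\<Sum>j\<in>Rf. c j *\<^sub>R snd j) = (\<Sum>i\<in>fst ` Fr. c (ref i) *\<^sub>R snd (ref i))"
      unfolding Rf_def using injr by (simp add: sum.reindex)
    also have "\<dots> = (\<Sum>i\<in>fst ` Fr. - (\<Sum>q\<in>{q\<in>Q. fst q = i}. lam q *\<^sub>R snd (ref (fst q))))"
    proof (rule sum.cong[OF refl])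
      fix i assume i: "i \<in> fst ` Fr"
      have "ref i \<notin> Q" "ref i \<in> Rf" unfolding Q_def Rf_def using i by auto
      then have "c (ref i) = - (\<Sum>q\<in>{q\<in>Q. fst q = i}. lam q)" unfolding c_def using ref[OF i] by simp
      then have "c (ref i) *\<^sub>R snd (ref i) = - (\<Sum>q\<in>{q\<in>Q. fst q = i}. lam q *\<^sub>R snd (ref i))"
        by (simp add: scaleR_sum_left)
      also have "\<dots> = - (\<Sum>q\<in>{q\<in>Q. fst q = i}. lam q *\<^sub>R snd (ref (fst q)))" by simp
      finally show "c (ref i) *\<^sub>R snd (ref i) = - (\<Sum>q\<in>{q\<in>Q. fst q = i}. lam q *\<^sub>R snd (ref (fst q)))" .
    qed
    also have "\<dots> = - (\<Sum>q\<in>Q. lam q *\<^sub>R snd (ref (fst q)))"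
      using sum.group[OF finQ finite_imageI[OF fin], where g=fst and h="\<lambda>q. lam q *\<^sub>R snd (ref (fst q))"]
      unfolding Q_def sum_negf by auto
    finally have "(\<Sum>j\<in>Fr. c j *\<^sub>R snd j) = (\<Sum>j\<in>Q. lam j *\<^sub>R snd j) - (\<Sum>q\<in>Q. lam q *\<^sub>R snd (ref (fst q)))"
      by simp
    also have "\<dots> = (\<Sum>j\<in>Q. lam j *\<^sub>R w j)" unfolding w_def by (simp add: sum_subtractf scaleR_diff_right)
    finally show ?thesis using lam(2) by simp
  qed
  have c4: "\<exists>j\<in>Fr. c j \<noteq> 0" using lam(1) unfolding c_def Q_def by auto
  show ?thesis using c1 c2 c3 c4 by blast
qed


declare split_paired_All[simp del] split_paired_Ex[simp del]



lemma round_step: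
  fixes J R :: "(nat \<times> (real ^ 'd)) set" and z :: "nat \<times> (real ^ 'd) \<Rightarrow> real"
  assumes finJ: "finite J" and RJ: "R \<subseteq> J" and box: "\<forall>j\<in>J. 0 \<le> z j \<and> z j \<le> 1"
  shows "\<exists>z'. (\<forall>j\<in>J. 0 \<le> z' j \<and> z' j \<le> 1)
     \<and> (\<forall>j. j \<notin> {j\<in>R. 0 < z j \<and> z j < 1} \<longrightarrow> z' j = z j)
     \<and> (\<forall>i. sum z' {j\<in>J. fst j = i} = sum z {j\<in>J. fst j = i})
     \<and> (\<Sum>j\<in>R. z' j *\<^sub>R snd j) = (\<Sum>j\<in>R. z j *\<^sub>R snd j)
     \<and> card {j\<in>R. 0 < z' j \<and> z' j < 1} \<le> card (fst ` {j\<in>R. 0 < z' j \<and> z' j < 1}) + CARD('d)"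
  using box
proof (induction "card {j\<in>R. 0 < z j \<and> z j < 1}" arbitrary: z rule: less_induct)
  case less
  define F where "F = {j\<in>R. 0 < z j \<and> z j < 1}"
  have finR: "finite R" using finJ RJ finite_subset by auto
  have finF: "finite F" unfolding F_def using finR by auto
  show ?case
  proof (cases "card F \<le> card (fst ` F) + CARD('d)")
    case True
    then show ?thesis using less.prems unfolding F_def by (intro exI[of _ z]) simp
  next
    case False
    then have big: "card F > card (fst ` F) + CARD('d)" by simp
    obtain c where c1: "\<forall>j. j \<notin> F \<longrightarrow> c j = 0" and c2: "\<forall>i. (\<Sum>j\<in>{j\<in>F. fst j = i}. c j) = 0"
      and c3: "(\<Sum>j\<in>F. c j *\<^sub>R snd j) = 0" and c4: "\<exists>j\<in>F. c j \<noteq> 0"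
      using direction[OF finF big] by blast
    define tau where "tau j = (if c j > 0 then (1 - z j) / c j else z j / (- c j))" for j
    define S where "S = {j\<in>F. c j \<noteq> 0}"
    have finS: "finite S" "S \<noteq> {}" unfolding S_def using finF c4 by auto
    have taupos: "tau j > 0" if "j \<in> S" for j
    proof -
      have "0 < z j" "z j < 1" "c j \<noteq> 0" using that unfolding S_def F_def by auto
      then show ?thesis unfolding tau_def by (auto simp: field_simps)
    qed
    define t where "t = Min (tau ` S)"
    have tle: "t \<le> tau j" if "j \<in> S" for j unfolding t_def using finS that by auto
    have "t \<in> tau ` S" unfolding t_def using Min_in[of "tau ` S"] finS by auto
    then obtain j0 where j0: "j0 \<in> S" "tau j0 = t" by (metis imageE)
    have tpos: "t > 0" using taupos[OF j0(1)] j0(2) by simp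
    define z1 where "z1 j = z j + t * c j" for j
    have z1out: "z1 j = z j" if "j \<notin> F" for j
    proof -
      have "c j = 0" using c1 that by blast
      then show ?thesis unfolding z1_def by simp
    qed
    have box1: "\<forall>j\<in>J. 0 \<le> z1 j \<and> z1 j \<le> 1"
    proof
      fix j assume jJ: "j \<in> J"
      show "0 \<le> z1 j \<and> z1 j \<le> 1"
      proof (cases "j \<in> S")
        case False
        then have "c j = 0" using c1 unfolding S_def by blast
        then show ?thesis using less.prems jJ unfolding z1_def by simp
      next
        case True
        have zj: "0 < z j" "z j < 1" "c j \<noteq> 0" using True unfolding S_def F_def by auto
        have tt: "t \<le> tau j" using tle True .
        show ?thesis
        proof (cases "c j > 0")
          case True
          then have "t * c j \<le> 1 - z j" using tt unfolding tau_def by (simp add: pos_le_divide_eq)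
          then show ?thesis using True tpos zj unfolding z1_def by (simp add: zero_le_mult_iff)
        next
          case False
          then have cn: "c j < 0" using zj by simp
          have "t \<le> z j / (- c j)" using tt False unfolding tau_def by simp
          then have "t * (- c j) \<le> z j" using pos_le_divide_eq[of "- c j" t "z j"] cn by simp
          moreover have "t * c j < 0" using cn tpos by (simp add: mult_pos_neg)
          ultimately show ?thesis using zj unfolding z1_def by simp
        qed
      qed
    qed
    have j0hit: "z1 j0 = 0 \<or> z1 j0 = 1"
    proof -
      have zj: "c j0 \<noteq> 0" using j0 unfolding S_def by auto
      show ?thesis
      proof (cases "c j0 > 0")
        case True
        then have "t * c j0 = 1 - z j0" using j0(2) unfolding tau_def by (auto simp: field_simps)
        then show ?thesis unfolding z1_def by simp
      next
        case False
        then have "c j0 < 0" using zj by simp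
        then have "t * c j0 = - z j0" using j0(2) False unfolding tau_def by (simp add: field_simps)
        then show ?thesis unfolding z1_def by simp
      qed
    qed
    define F1 where "F1 = {j\<in>R. 0 < z1 j \<and> z1 j < 1}"
    have F1F: "F1 \<subseteq> F - {j0}"
    proof
      fix j assume j: "j \<in> F1"
      have "j \<in> F"
      proof (rule ccontr)
        assume "j \<notin> F"
        then have "z1 j = z j" using z1out by simp
        then show False using j \<open>j \<notin> F\<close> unfolding F1_def F_def by auto
      qed
      moreover have "j \<noteq> j0" using j j0hit unfolding F1_def by auto
      ultimately show "j \<in> F - {j0}" by simp
    qed
    have "j0 \<in> F" using j0 unfolding S_def by auto
    then have "card (F - {j0}) < card F" using finF by (rule card_Diff1_less[rotated])
    moreover have "card F1 \<le> card (F - {j0})" using F1F finF by (intro card_mono) auto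
    ultimately have "card F1 < card F" by linarith
    note IH = less.hyps[of z1, OF this[unfolded F1_def F_def] box1]
    from IH obtain z' where H: "(\<forall>j\<in>J. 0 \<le> z' j \<and> z' j \<le> 1)
     \<and> (\<forall>j. j \<notin> {j\<in>R. 0 < z1 j \<and> z1 j < 1} \<longrightarrow> z' j = z1 j)
     \<and> (\<forall>i. sum z' {j\<in>J. fst j = i} = sum z1 {j\<in>J. fst j = i})
     \<and> (\<Sum>j\<in>R. z' j *\<^sub>R snd j) = (\<Sum>j\<in>R. z1 j *\<^sub>R snd j)
     \<and> card {j\<in>R. 0 < z' j \<and> z' j < 1} \<le> card (fst ` {j\<in>R. 0 < z' j \<and> z' j < 1}) + CARD('d)" ..
    note z'1 = H[THEN conjunct1]
    note z'2 = H[THEN conjunct2, THEN conjunct1, folded F1_def]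
    note z'3 = H[THEN conjunct2, THEN conjunct2, THEN conjunct1]
    note z'4 = H[THEN conjunct2, THEN conjunct2, THEN conjunct2, THEN conjunct1]
    note z'5 = H[THEN conjunct2, THEN conjunct2, THEN conjunct2, THEN conjunct2]
    have r2: "\<forall>j. j \<notin> F \<longrightarrow> z' j = z j"
    proof (intro allI impI)
      fix j assume "j \<notin> F"
      then have "j \<notin> F1" "z1 j = z j" using F1F z1out by auto
      then show "z' j = z j" using z'2[rule_format, of j] by simp
    qed
    have r3: "sum z' {j\<in>J. fst j = i} = sum z {j\<in>J. fst j = i}" for i
    proof -
      have FJ: "{j\<in>F. fst j = i} \<subseteq> {j\<in>J. fst j = i}" unfolding F_def using RJ by auto
      have "sum c {j\<in>J. fst j = i} = sum c {j\<in>F. fst j = i}"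
        by (rule sum.mono_neutral_right) (use finJ FJ c1 in auto)
      then have "sum c {j\<in>J. fst j = i} = 0" using c2 by simp
      moreover have "sum z1 {j\<in>J. fst j = i} = sum z {j\<in>J. fst j = i} + t * sum c {j\<in>J. fst j = i}"
        unfolding z1_def by (simp add: sum.distrib sum_distrib_left)
      ultimately have "sum z1 {j\<in>J. fst j = i} = sum z {j\<in>J. fst j = i}" by simp
      then show ?thesis using z'3 by simp
    qed
    have r4: "(\<Sum>j\<in>R. z' j *\<^sub>R snd j) = (\<Sum>j\<in>R. z j *\<^sub>R snd j)"
    proof -
      have FR: "F \<subseteq> R" unfolding F_def by auto
      have "(\<Sum>j\<in>R. c j *\<^sub>R snd j) = (\<Sum>j\<in>F. c j *\<^sub>R snd j)"
        by (rule sum.mono_neutral_right) (use finR FR c1 in auto)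
      then have "(\<Sum>j\<in>R. c j *\<^sub>R snd j) = 0" using c3 by simp
      moreover have "(\<Sum>j\<in>R. z1 j *\<^sub>R snd j) = (\<Sum>j\<in>R. z j *\<^sub>R snd j) + t *\<^sub>R (\<Sum>j\<in>R. c j *\<^sub>R snd j)"
        unfolding z1_def by (simp add: scaleR_add_left sum.distrib scaleR_sum_right)
      ultimately have "(\<Sum>j\<in>R. z1 j *\<^sub>R snd j) = (\<Sum>j\<in>R. z j *\<^sub>R snd j)" by simp
      then show ?thesis using z'4 by simp
    qed
    show ?thesis unfolding F_def[symmetric] by (rule exI[of _ z'], intro conjI z'1 r2 r3 r4 z'5 allI)
  qed
qed




lemma block_bound:
  fixes Fb :: "'a set" and y z :: "'a \<Rightarrow> real"
  assumes fin: "finite Fb" and ne: "Fb \<noteq> {}" and y01: "\<forall>j\<in>Fb. y j = 0 \<or> y j = 1"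
    and zb: "\<forall>j\<in>Fb. 0 \<le> z j \<and> z j \<le> 1" and eq: "sum y Fb = sum z Fb"
  shows "(\<Sum>j\<in>Fb. \<bar>y j - z j\<bar>) \<le> 2 * (real (card Fb) - 1)"
proof -
  define On where "On = {j\<in>Fb. y j = 1}"
  define Z where "Z = Fb - On"
  have FU: "Fb = On \<union> Z" "On \<inter> Z = {}" unfolding On_def Z_def by auto
  have finO: "finite On" and finZ: "finite Z" using fin unfolding On_def Z_def by auto
  have yZ: "\<forall>j\<in>Z. y j = 0" using y01 unfolding Z_def On_def by auto
  have s1: "(\<Sum>j\<in>Fb. \<bar>y j - z j\<bar>) = (\<Sum>j\<in>On. \<bar>y j - z j\<bar>) + (\<Sum>j\<in>Z. \<bar>y j - z j\<bar>)"
    unfolding FU(1) by (rule sum.union_disjoint[OF finO finZ FU(2)])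
  have s2: "(\<Sum>j\<in>On. \<bar>y j - z j\<bar>) = (\<Sum>j\<in>On. 1 - z j)"
    by (rule sum.cong) (use zb in \<open>auto simp: On_def\<close>)
  have s3: "(\<Sum>j\<in>Z. \<bar>y j - z j\<bar>) = (\<Sum>j\<in>Z. z j)"
    by (rule sum.cong) (use zb yZ in \<open>auto simp: Z_def\<close>)
  have sy: "sum y Fb = real (card On)"
  proof -
    have "sum y Fb = sum y On + sum y Z" unfolding FU(1) by (rule sum.union_disjoint[OF finO finZ FU(2)])
    also have "sum y On = (\<Sum>j\<in>On. 1)" by (rule sum.cong) (auto simp: On_def)
    also have "sum y Z = 0" using yZ by simp
    finally show ?thesis by simp
  qed
  have sz: "sum z Fb = sum z On + sum z Z" unfolding FU(1) by (rule sum.union_disjoint[OF finO finZ FU(2)])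
  have bal: "(\<Sum>j\<in>On. 1 - z j) = (\<Sum>j\<in>Z. z j)"
    using eq sy sz by (simp add: sum_subtractf)
  have tot: "(\<Sum>j\<in>Fb. \<bar>y j - z j\<bar>) = 2 * (\<Sum>j\<in>Z. z j)" using s1 s2 s3 bal by simp
  have c1: "card Fb \<ge> 1" using fin ne by (simp add: Suc_leI card_gt_0_iff)
  show ?thesis
  proof (cases "On = {}")
    case True
    then have "(\<Sum>j\<in>Z. z j) = 0" using bal by simp
    then show ?thesis using tot c1 by simp
  next
    case False
    have "card Z = card Fb - card On" unfolding Z_def using fin by (simp add: card_Diff_subset On_def)
    moreover have "card On \<ge> 1" using False finO by (simp add: Suc_leI card_gt_0_iff)
    moreover have "card On \<le> card Fb" using fin unfolding On_def by (intro card_mono) auto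
    ultimately have cZ: "real (card Z) \<le> real (card Fb) - 1" by linarith
    have "(\<Sum>j\<in>Z. z j) \<le> (\<Sum>j\<in>Z. 1)" by (rule sum_mono) (use zb in \<open>auto simp: Z_def\<close>)
    then have "(\<Sum>j\<in>Z. z j) \<le> real (card Z)" by simp
    then show ?thesis using tot cZ by simp
  qed
qed

lemma good_bound:
  fixes J :: "(nat \<times> (real ^ 'd)) set" and x y z :: "nat \<times> (real ^ 'd) \<Rightarrow> real"
  assumes nrm: "is_norm nrm" and finJ: "finite J" and unit: "\<forall>j\<in>J. nrm (snd j) \<le> 1"
    and zb: "\<forall>j\<in>J. 0 \<le> z j \<and> z j \<le> 1" and y01: "\<forall>j\<in>J. y j = 0 \<or> y j = 1"
    and bs: "\<forall>i. sum y {j\<in>J. fst j = i} = sum z {j\<in>J. fst j = i}"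
    and agree: "\<forall>j\<in>J. (z j = 0 \<or> z j = 1) \<longrightarrow> y j = z j"
    and vz: "(\<Sum>j\<in>{j\<in>J. fst j \<le> m}. (z j - x j) *\<^sub>R snd j) = 0"
    and exc: "card {j\<in>{j\<in>J. fst j \<le> m}. 0 < z j \<and> z j < 1}
       \<le> card (fst ` {j\<in>{j\<in>J. fst j \<le> m}. 0 < z j \<and> z j < 1}) + CARD('d)"
  shows "nrm (\<Sum>j\<in>{j\<in>J. fst j \<le> m}. (y j - x j) *\<^sub>R snd j) \<le> 2 * real CARD('d)"
proof -
  define R where "R = {j\<in>J. fst j \<le> m}"
  define F where "F = {j\<in>R. 0 < z j \<and> z j < 1}"
  have finR: "finite R" unfolding R_def using finJ by auto
  have finF: "finite F" unfolding F_def using finR by auto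
  have FR: "F \<subseteq> R" unfolding F_def by auto
  have RJ: "R \<subseteq> J" unfolding R_def by auto
  have yzout: "y j = z j" if "j \<in> R" "j \<notin> F" for j
  proof -
    have "z j = 0 \<or> z j = 1" using that zb RJ unfolding F_def by force
    then show ?thesis using agree that RJ by blast
  qed
  have "(\<Sum>j\<in>R. (y j - x j) *\<^sub>R snd j) = (\<Sum>j\<in>R. (y j - z j) *\<^sub>R snd j) + (\<Sum>j\<in>R. (z j - x j) *\<^sub>R snd j)"
    by (simp add: sum.distrib[symmetric] scaleR_add_left[symmetric])
  also have "(\<Sum>j\<in>R. (z j - x j) *\<^sub>R snd j) = 0" using vz unfolding R_def .
  also have "(\<Sum>j\<in>R. (y j - z j) *\<^sub>R snd j) = (\<Sum>j\<in>F. (y j - z j) *\<^sub>R snd j)"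
    by (rule sum.mono_neutral_right[OF finR FR]) (use yzout in auto)
  finally have eq1: "(\<Sum>j\<in>R. (y j - x j) *\<^sub>R snd j) = (\<Sum>j\<in>F. (y j - z j) *\<^sub>R snd j)" by simp
  have "nrm (\<Sum>j\<in>F. (y j - z j) *\<^sub>R snd j) \<le> (\<Sum>j\<in>F. nrm ((y j - z j) *\<^sub>R snd j))"
    by (rule nrm_sum[OF nrm])
  also have "\<dots> \<le> (\<Sum>j\<in>F. \<bar>y j - z j\<bar>)"
  proof (rule sum_mono)
    fix j assume "j \<in> F"
    then have "nrm (snd j) \<le> 1" using unit FR RJ by auto
    then show "nrm ((y j - z j) *\<^sub>R snd j) \<le> \<bar>y j - z j\<bar>"
      using nrm_props(3)[OF nrm] by (simp add: mult_left_le)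
  qed
  also have "\<dots> = (\<Sum>b\<in>fst ` F. (\<Sum>j\<in>{j\<in>F. fst j = b}. \<bar>y j - z j\<bar>))"
    using sum.group[OF finF finite_imageI[OF finF], where g=fst and h="\<lambda>j. \<bar>y j - z j\<bar>"] by simp
  also have "\<dots> \<le> (\<Sum>b\<in>fst ` F. 2 * (real (card {j\<in>F. fst j = b}) - 1))"
  proof (rule sum_mono)
    fix b assume b: "b \<in> fst ` F"
    define Fb where "Fb = {j\<in>F. fst j = b}"
    have finFb: "finite Fb" unfolding Fb_def using finF by auto
    have neFb: "Fb \<noteq> {}" unfolding Fb_def using b by auto
    have bm: "b \<le> m" using b FR unfolding R_def by auto
    define Bk where "Bk = {j\<in>J. fst j = b}"
    have FbB: "Fb \<subseteq> Bk" unfolding Fb_def Bk_def using FR RJ by auto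
    have finB: "finite Bk" unfolding Bk_def using finJ by auto
    have rest: "\<forall>j\<in>Bk - Fb. y j = z j"
    proof
      fix j assume j: "j \<in> Bk - Fb"
      then have "j \<in> R" "j \<notin> F" unfolding Bk_def Fb_def R_def using bm by auto
      then show "y j = z j" by (rule yzout)
    qed
    have "sum y Bk = sum y Fb + sum y (Bk - Fb)" using finB FbB by (metis sum.subset_diff add.commute)
    moreover have "sum z Bk = sum z Fb + sum z (Bk - Fb)" using finB FbB by (metis sum.subset_diff add.commute)
    moreover have "sum y (Bk - Fb) = sum z (Bk - Fb)" by (intro sum.cong refl) (use rest in auto)
    moreover have "sum y Bk = sum z Bk" using bs unfolding Bk_def by blast
    ultimately have eqb: "sum y Fb = sum z Fb" by simp
    have "(\<Sum>j\<in>Fb. \<bar>y j - z j\<bar>) \<le> 2 * (real (card Fb) - 1)"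
      by (rule block_bound[OF finFb neFb]) (use y01 zb FbB Bk_def eqb in auto)
    then show "(\<Sum>j\<in>{j\<in>F. fst j = b}. \<bar>y j - z j\<bar>) \<le> 2 * (real (card {j\<in>F. fst j = b}) - 1)"
      unfolding Fb_def .
  qed
  also have "\<dots> = 2 * ((\<Sum>b\<in>fst ` F. real (card {j\<in>F. fst j = b})) - real (card (fst ` F)))"
    by (simp add: sum_distrib_left[symmetric] sum_subtractf)
  also have "(\<Sum>b\<in>fst ` F. real (card {j\<in>F. fst j = b})) = real (card F)"
  proof -
    have "(\<Sum>b\<in>fst ` F. (\<Sum>j\<in>{j\<in>F. fst j = b}. (1::real))) = (\<Sum>j\<in>F. 1)"
      using sum.group[OF finF finite_imageI[OF finF], where g=fst and h="\<lambda>j. (1::real)"] by simp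
    then show ?thesis by simp
  qed
  also have "2 * (real (card F) - real (card (fst ` F))) \<le> 2 * real CARD('d)"
    using exc unfolding F_def R_def by simp
  finally show ?thesis using eq1 unfolding R_def by simp
qed




lemma sum_block:
  fixes J :: "(nat \<times> 'b) set"
  assumes "J = Sigma I W" "i \<in> I"
  shows "sum f {j\<in>J. fst j = i} = (\<Sum>v\<in>W i. f (i, v))"
proof -
  have "{j\<in>J. fst j = i} = Pair i ` W i" using assms by auto
  moreover have "inj_on (Pair i) (W i)" by (simp add: inj_on_def)
  ultimately show ?thesis by (simp add: sum.reindex)
qed

lemma subset_select:
  fixes nrm :: "real ^ 'd \<Rightarrow> real" and W :: "nat \<Rightarrow> (real ^ 'd) set" and kap :: "nat \<Rightarrow> nat"
  assumes nrm: "is_norm nrm" and finW: "\<forall>i\<in>{1..N}. finite (W i)"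
    and unitW: "\<forall>i\<in>{1..N}. W i \<subseteq> {v. nrm v \<le> 1}" and kapW: "\<forall>i\<in>{1..N}. kap i \<le> card (W i)"
  shows "\<exists>A. (\<forall>i\<in>{1..N}. A i \<subseteq> W i \<and> card (A i) = kap i) \<and>
    (\<forall>n\<in>{1..N}. nrm (\<Sum>i\<in>{1..n}. (\<Sum>v\<in>A i. v) - (real (kap i) / real (card (W i))) *\<^sub>R (\<Sum>v\<in>W i. v))
       \<le> 2 * real CARD('d))"
proof -
  define J where "J = Sigma {1..N} W"
  have finJ: "finite J" unfolding J_def using finW by auto
  have unitJ: "\<forall>j\<in>J. nrm (snd j) \<le> 1" unfolding J_def using unitW by auto
  define x where "x j = real (kap (fst j)) / real (card (W (fst j)))" for j :: "nat \<times> (real ^ 'd)"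
  have xb: "\<forall>j\<in>J. 0 \<le> x j \<and> x j \<le> 1"
  proof
    fix j assume "j \<in> J"
    then have "fst j \<in> {1..N}" unfolding J_def by auto
    then have "kap (fst j) \<le> card (W (fst j))" using kapW by auto
    then show "0 \<le> x j \<and> x j \<le> 1" unfolding x_def by (cases "card (W (fst j)) = 0") (auto simp: divide_le_eq_1)
  qed
  define Good where "Good m z \<longleftrightarrow> (\<forall>y. (\<forall>j\<in>J. y j = 0 \<or> y j = 1) \<longrightarrow>
      (\<forall>i. sum y {j\<in>J. fst j = i} = sum z {j\<in>J. fst j = i}) \<longrightarrow>
      (\<forall>j\<in>J. (z j = 0 \<or> z j = 1) \<longrightarrow> y j = z j) \<longrightarrow>
      nrm (\<Sum>j\<in>{j\<in>J. fst j \<le> m}. (y j - x j) *\<^sub>R snd j) \<le> 2 * real CARD('d))"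
    for m and z :: "nat \<times> (real ^ 'd) \<Rightarrow> real"
  define Inv where "Inv k z \<longleftrightarrow> (\<forall>j\<in>J. 0 \<le> z j \<and> z j \<le> 1)
      \<and> (\<forall>i. sum z {j\<in>J. fst j = i} = sum x {j\<in>J. fst j = i})
      \<and> (\<forall>j\<in>J. k < fst j \<longrightarrow> z j = x j)
      \<and> (\<Sum>j\<in>{j\<in>J. fst j \<le> k}. (z j - x j) *\<^sub>R snd j) = 0
      \<and> (\<forall>m\<in>{1..k}. Good m z)" for k and z :: "nat \<times> (real ^ 'd) \<Rightarrow> real"
  have main: "k \<le> N \<Longrightarrow> \<exists>z. Inv k z" for k
  proof (induction k)
    case 0
    have "Inv 0 x" unfolding Inv_def using xb by simp
    then show ?case by blast
  next
    case (Suc k)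
    then obtain z where zI: "Inv k z" by auto
    have za: "\<forall>j\<in>J. 0 \<le> z j \<and> z j \<le> 1" and zb: "\<forall>i. sum z {j\<in>J. fst j = i} = sum x {j\<in>J. fst j = i}"
      and zc: "\<forall>j\<in>J. k < fst j \<longrightarrow> z j = x j" and zd: "(\<Sum>j\<in>{j\<in>J. fst j \<le> k}. (z j - x j) *\<^sub>R snd j) = 0"
      and zf: "\<forall>m\<in>{1..k}. Good m z" using zI unfolding Inv_def by blast+
    define R where "R = {j\<in>J. fst j \<le> Suc k}"
    have RJ: "R \<subseteq> J" unfolding R_def by auto
    have finR: "finite R" using finJ RJ finite_subset by auto
    obtain z' where H: "(\<forall>j\<in>J. 0 \<le> z' j \<and> z' j \<le> 1)
     \<and> (\<forall>j. j \<notin> {j\<in>R. 0 < z j \<and> z j < 1} \<longrightarrow> z' j = z j)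
     \<and> (\<forall>i. sum z' {j\<in>J. fst j = i} = sum z {j\<in>J. fst j = i})
     \<and> (\<Sum>j\<in>R. z' j *\<^sub>R snd j) = (\<Sum>j\<in>R. z j *\<^sub>R snd j)
     \<and> card {j\<in>R. 0 < z' j \<and> z' j < 1} \<le> card (fst ` {j\<in>R. 0 < z' j \<and> z' j < 1}) + CARD('d)"
      using round_step[OF finJ RJ za] by (elim exE) (rule that)
    note h1 = H[THEN conjunct1]
    note h2 = H[THEN conjunct2, THEN conjunct1]
    note h3 = H[THEN conjunct2, THEN conjunct2, THEN conjunct1]
    note h4 = H[THEN conjunct2, THEN conjunct2, THEN conjunct2, THEN conjunct1]
    note h5 = H[THEN conjunct2, THEN conjunct2, THEN conjunct2, THEN conjunct2]
    have ib: "\<forall>i. sum z' {j\<in>J. fst j = i} = sum x {j\<in>J. fst j = i}" using h3 zb by simp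
    have ic: "\<forall>j\<in>J. Suc k < fst j \<longrightarrow> z' j = x j"
    proof (intro ballI impI)
      fix j assume j: "j \<in> J" "Suc k < fst j"
      then have "j \<notin> {j\<in>R. 0 < z j \<and> z j < 1}" unfolding R_def by auto
      then have "z' j = z j" using h2 by blast
      then show "z' j = x j" using zc j by auto
    qed
    have id: "(\<Sum>j\<in>R. (z' j - x j) *\<^sub>R snd j) = 0"
    proof -
      have "(\<Sum>j\<in>R. (z' j - x j) *\<^sub>R snd j) = (\<Sum>j\<in>R. z' j *\<^sub>R snd j) - (\<Sum>j\<in>R. x j *\<^sub>R snd j)"
        by (simp add: scaleR_diff_left sum_subtractf)
      also have "\<dots> = (\<Sum>j\<in>R. (z j - x j) *\<^sub>R snd j)"
        using h4 by (simp add: scaleR_diff_left sum_subtractf)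
      also have "\<dots> = (\<Sum>j\<in>{j\<in>J. fst j \<le> k}. (z j - x j) *\<^sub>R snd j)"
        by (rule sum.mono_neutral_right[OF finR]) (use zc in \<open>auto simp: R_def\<close>)
      finally show ?thesis using zd by simp
    qed
    have ifg: "\<forall>m\<in>{1..Suc k}. Good m z'"
    proof
      fix m assume m: "m \<in> {1..Suc k}"
      show "Good m z'"
      proof (cases "m \<le> k")
        case True
        then have gm: "Good m z" using zf m by auto
        show ?thesis unfolding Good_def
        proof (intro allI impI)
          fix y assume y1: "\<forall>j\<in>J. y j = 0 \<or> y j = 1"
            and y2: "\<forall>i. sum y {j\<in>J. fst j = i} = sum z' {j\<in>J. fst j = i}"
            and y3: "\<forall>j\<in>J. (z' j = 0 \<or> z' j = 1) \<longrightarrow> y j = z' j"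
          have y2': "\<forall>i. sum y {j\<in>J. fst j = i} = sum z {j\<in>J. fst j = i}" using y2 h3 by simp
          have y3': "\<forall>j\<in>J. (z j = 0 \<or> z j = 1) \<longrightarrow> y j = z j"
          proof (intro ballI impI)
            fix j assume "j \<in> J" "z j = 0 \<or> z j = 1"
            moreover then have "z' j = z j" using h2 by auto
            ultimately show "y j = z j" using y3 by auto
          qed
          show "nrm (\<Sum>j\<in>{j\<in>J. fst j \<le> m}. (y j - x j) *\<^sub>R snd j) \<le> 2 * real CARD('d)"
            using gm y1 y2' y3' unfolding Good_def by blast
        qed
      next
        case False
        then have mk: "m = Suc k" using m by auto
        show ?thesis unfolding Good_def
        proof (intro allI impI)
          fix y assume y1: "\<forall>j\<in>J. y j = 0 \<or> y j = 1"
            and y2: "\<forall>i. sum y {j\<in>J. fst j = i} = sum z' {j\<in>J. fst j = i}"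
            and y3: "\<forall>j\<in>J. (z' j = 0 \<or> z' j = 1) \<longrightarrow> y j = z' j"
          show "nrm (\<Sum>j\<in>{j\<in>J. fst j \<le> m}. (y j - x j) *\<^sub>R snd j) \<le> 2 * real CARD('d)"
            unfolding mk
            by (rule good_bound[OF nrm finJ unitJ h1 y1 y2 y3]) (use id h5 in \<open>simp_all add: R_def\<close>)
        qed
      qed
    qed
    have "Inv (Suc k) z'" unfolding Inv_def using h1 ib ic id ifg unfolding R_def by blast
    then show ?case by blast
  qed
  obtain z where "Inv N z" using main by blast
  then have za: "\<forall>j\<in>J. 0 \<le> z j \<and> z j \<le> 1" and zb: "\<forall>i. sum z {j\<in>J. fst j = i} = sum x {j\<in>J. fst j = i}"
      and zf: "\<forall>m\<in>{1..N}. Good m z" unfolding Inv_def by blast+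
  define On where "On i = {v\<in>W i. z (i, v) = 1}" for i
  define Fb where "Fb i = {v\<in>W i. 0 < z (i, v) \<and> z (i, v) < 1}" for i
  have cnt: "card (On i) \<le> kap i \<and> kap i - card (On i) \<le> card (Fb i)" if i: "i \<in> {1..N}" for i
  proof -
    have fin: "finite (W i)" using finW i by auto
    have sx: "sum x {j\<in>J. fst j = i} = real (kap i)"
    proof (cases "card (W i) = 0")
      case True
      moreover have "kap i \<le> card (W i)" using kapW i by blast
      ultimately have "kap i = 0" by simp
      then show ?thesis unfolding x_def by simp
    next
      case False
      have "sum x {j\<in>J. fst j = i} = (\<Sum>v\<in>W i. real (kap i) / real (card (W i)))"
        using sum_block[OF J_def i, of x] unfolding x_def by simp
      then show ?thesis using False by simp
    qed
    have sz: "sum z {j\<in>J. fst j = i} = (\<Sum>v\<in>W i. z (i, v))" by (rule sum_block[OF J_def i])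
    define Ze where "Ze = W i - On i - Fb i"
    have WU: "W i = On i \<union> (Fb i \<union> Ze)" unfolding Ze_def On_def Fb_def by auto
    have d1: "On i \<inter> (Fb i \<union> Ze) = {}" "Fb i \<inter> Ze = {}" unfolding Ze_def On_def Fb_def by auto
    have fins: "finite (On i)" "finite (Fb i)" "finite Ze" using fin unfolding On_def Fb_def Ze_def by auto
    have zZe: "\<forall>v\<in>Ze. z (i, v) = 0"
    proof
      fix v assume v: "v \<in> Ze"
      then have "v \<in> W i" unfolding Ze_def by auto
      then have "(i, v) \<in> J" unfolding J_def using i by auto
      then show "z (i, v) = 0" using za v unfolding Ze_def On_def Fb_def by force
    qed
    have "(\<Sum>v\<in>W i. z (i, v)) = (\<Sum>v\<in>On i. z (i, v)) + ((\<Sum>v\<in>Fb i. z (i, v)) + (\<Sum>v\<in>Ze. z (i, v)))"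
      unfolding WU by (simp add: sum.union_disjoint fins d1)
    also have "(\<Sum>v\<in>On i. z (i, v)) = real (card (On i))" unfolding On_def by simp
    also have "(\<Sum>v\<in>Ze. z (i, v)) = 0" using zZe by simp
    finally have eq: "real (kap i) = real (card (On i)) + (\<Sum>v\<in>Fb i. z (i, v))"
      using zb sx sz by simp
    have "(\<Sum>v\<in>Fb i. z (i, v)) \<ge> 0" by (rule sum_nonneg) (auto simp: Fb_def)
    moreover have "(\<Sum>v\<in>Fb i. z (i, v)) \<le> (\<Sum>v\<in>Fb i. 1)" by (rule sum_mono) (auto simp: Fb_def)
    ultimately show ?thesis using eq by simp
  qed
  have "\<forall>i. \<exists>C. i \<in> {1..N} \<longrightarrow> C \<subseteq> Fb i \<and> card C = kap i - card (On i)"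
  proof
    fix i
    show "\<exists>C. i \<in> {1..N} \<longrightarrow> C \<subseteq> Fb i \<and> card C = kap i - card (On i)"
    proof (cases "i \<in> {1..N}")
      case True
      have "finite (Fb i)" using finW True unfolding Fb_def by auto
      then obtain C where "C \<subseteq> Fb i" "card C = kap i - card (On i)"
        using obtain_subset_with_card_n cnt[OF True] by metis
      then show ?thesis by blast
    qed auto
  qed
  then obtain C where C: "\<And>i. i \<in> {1..N} \<Longrightarrow> C i \<subseteq> Fb i \<and> card (C i) = kap i - card (On i)"
    by metis
  define A where "A i = On i \<union> C i" for i
  have AW: "A i \<subseteq> W i" if "i \<in> {1..N}" for i using C[OF that] unfolding A_def On_def Fb_def by auto
  have cA: "card (A i) = kap i" if i: "i \<in> {1..N}" for i
  proof -
    have fin: "finite (W i)" using finW i by auto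
    have "On i \<inter> C i = {}" using C[OF i] unfolding On_def Fb_def by auto
    moreover have "finite (On i)" "finite (C i)" using fin C[OF i] finite_subset unfolding On_def Fb_def
      by (auto intro: finite_subset[of _ "W i"])
    ultimately have "card (A i) = card (On i) + card (C i)" unfolding A_def by (simp add: card_Un_disjoint)
    then show ?thesis using C[OF i] cnt[OF i] by simp
  qed
  define y where "y j = (if snd j \<in> A (fst j) then 1 else (0::real))" for j :: "nat \<times> (real ^ 'd)"
  have y1: "\<forall>j\<in>J. y j = 0 \<or> y j = 1" unfolding y_def by simp
  have y2: "\<forall>i. sum y {j\<in>J. fst j = i} = sum z {j\<in>J. fst j = i}"
  proof
    fix i
    show "sum y {j\<in>J. fst j = i} = sum z {j\<in>J. fst j = i}"
    proof (cases "i \<in> {1..N}")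
      case True
      have fin: "finite (W i)" using finW True by auto
      have "sum y {j\<in>J. fst j = i} = (\<Sum>v\<in>W i. if v \<in> A i then 1 else 0)"
        using sum_block[OF J_def True, of y] unfolding y_def by simp
      also have "\<dots> = real (card (A i))" using AW[OF True] fin
        by (simp add: sum.If_cases Int_absorb1)
      also have "\<dots> = real (kap i)" using cA[OF True] by simp
      also have "\<dots> = sum z {j\<in>J. fst j = i}"
      proof -
        have "sum x {j\<in>J. fst j = i} = real (kap i)"
        proof (cases "card (W i) = 0")
          case c0: True
          moreover have "kap i \<le> card (W i)" using kapW True by blast
          ultimately have "kap i = 0" by simp
          then show ?thesis unfolding x_def by simp
        next
          case False
          have "sum x {j\<in>J. fst j = i} = (\<Sum>v\<in>W i. real (kap i) / real (card (W i)))"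
            using sum_block[OF J_def True, of x] unfolding x_def by simp
          then show ?thesis using False by simp
        qed
        then show ?thesis using zb by simp
      qed
      finally show ?thesis .
    next
      case False
      then have "{j\<in>J. fst j = i} = {}" unfolding J_def by auto
      then show ?thesis by (metis sum.empty)
    qed
  qed
  have y3: "\<forall>j\<in>J. (z j = 0 \<or> z j = 1) \<longrightarrow> y j = z j"
  proof (intro ballI impI)
    fix j assume j: "j \<in> J" and zj: "z j = 0 \<or> z j = 1"
    obtain i v where ij: "j = (i, v)" by (cases j)
    have iv: "i \<in> {1..N}" "v \<in> W i" using j ij unfolding J_def by auto
    show "y j = z j"
    proof (cases "z j = 1")
      case True
      then have "v \<in> A i" using iv ij unfolding A_def On_def by auto
      then show ?thesis using True ij unfolding y_def by simp
    next
      case False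
      then have z0: "z j = 0" using zj by auto
      then have "v \<notin> On i" "v \<notin> Fb i" using ij unfolding On_def Fb_def by auto
      then have "v \<notin> A i" using C[OF iv(1)] unfolding A_def by auto
      then show ?thesis using z0 ij unfolding y_def by simp
    qed
  qed
  have final: "nrm (\<Sum>i\<in>{1..n}. (\<Sum>v\<in>A i. v) - (real (kap i) / real (card (W i))) *\<^sub>R (\<Sum>v\<in>W i. v))
       \<le> 2 * real CARD('d)" if n: "n \<in> {1..N}" for n
  proof -
    have g: "nrm (\<Sum>j\<in>{j\<in>J. fst j \<le> n}. (y j - x j) *\<^sub>R snd j) \<le> 2 * real CARD('d)"
      using zf n y1 y2 y3 unfolding Good_def by blast
    have S: "{j\<in>J. fst j \<le> n} = Sigma {1..n} W" unfolding J_def using n by auto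
    have "(\<Sum>j\<in>{j\<in>J. fst j \<le> n}. (y j - x j) *\<^sub>R snd j) = (\<Sum>i\<in>{1..n}. \<Sum>v\<in>W i. (y (i, v) - x (i, v)) *\<^sub>R v)"
      unfolding S using finW n by (subst sum.Sigma) (auto simp: case_prod_beta)
    also have "\<dots> = (\<Sum>i\<in>{1..n}. (\<Sum>v\<in>A i. v) - (real (kap i) / real (card (W i))) *\<^sub>R (\<Sum>v\<in>W i. v))"
    proof (rule sum.cong[OF refl])
      fix i assume i: "i \<in> {1..n}"
      then have iN: "i \<in> {1..N}" using n by auto
      have fin: "finite (W i)" using finW iN by auto
      have "(\<Sum>v\<in>W i. (y (i, v) - x (i, v)) *\<^sub>R v) = (\<Sum>v\<in>W i. (if v \<in> A i then v else 0)) - (\<Sum>v\<in>W i. (real (kap i) / real (card (W i))) *\<^sub>R v)"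
      proof -
        have pw: "(y (i, v) - x (i, v)) *\<^sub>R v = (if v \<in> A i then v else 0) - (real (kap i) / real (card (W i))) *\<^sub>R v" for v
          unfolding y_def x_def by (simp add: scaleR_diff_left)
        show ?thesis unfolding pw by (simp add: sum_subtractf)
      qed
      also have "(\<Sum>v\<in>W i. (if v \<in> A i then v else 0)) = (\<Sum>v\<in>A i. v)"
        using fin AW[OF iN] by (simp add: sum.If_cases Int_absorb1)
      finally show "(\<Sum>v\<in>W i. (y (i, v) - x (i, v)) *\<^sub>R v) = (\<Sum>v\<in>A i. v) - (real (kap i) / real (card (W i))) *\<^sub>R (\<Sum>v\<in>W i. v)"
        by (simp add: scaleR_sum_right)
    qed
    finally show ?thesis using g by simp
  qed
  show ?thesis using AW cA final by blast
qed




definition Gf :: "nat \<Rightarrow> real" where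
  "Gf s = (if s \<le> 1 then 0 else if s = 2 then 1 else 5/2 - 5 / (2 * real s))"

lemma Gf_nonneg: "Gf s \<ge> 0"
proof -
  have "s \<ge> 3 \<Longrightarrow> 5 / (2 * real s) \<le> 5/2" by (simp add: divide_le_eq)
  then show ?thesis unfolding Gf_def by auto
qed

lemma Gf_step:
  assumes s: "s \<ge> 2" and c: "c = s div 2 \<or> c = s - s div 2"
  shows "Gf c + 1 / real c \<le> Gf s"
proof -
  have c1: "c \<ge> 1" using s c by auto
  have c2: "2 * c \<le> s + 1" using c by auto
  consider "c = 1" | "c = 2" | "c \<ge> 3" using c1 by linarith
  then show ?thesis
  proof cases
    case 1
    show ?thesis
    proof (cases "s = 2")
      case False
      then have "s \<ge> 3" using s by simp
      then have "5 / (2 * real s) \<le> 5/6" by (simp add: divide_le_eq)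
      then show ?thesis using 1 False s unfolding Gf_def by simp
    qed (use 1 in \<open>simp add: Gf_def\<close>)
  next
    case 2
    then have "s \<ge> 3" using c2 by simp
    then have "5 / (2 * real s) \<le> 5/6" by (simp add: divide_le_eq)
    then show ?thesis using 2 \<open>s \<ge> 3\<close> unfolding Gf_def by simp
  next
    case 3
    then have s5: "s \<ge> 5" using c2 by simp
    have "5 * real c \<le> 3 * real s" using c2 s5 by linarith
    then have "5 / (2 * real s) \<le> 3 / (2 * real c)" using 3 s5 by (simp add: field_simps)
    moreover have "Gf c + 1 / real c = 5/2 - 3 / (2 * real c)" using 3 unfolding Gf_def by (simp add: field_simps)
    moreover have "Gf s = 5/2 - 5 / (2 * real s)" using s5 unfolding Gf_def by simp
    ultimately show ?thesis by simp
  qed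
qed

lemma nrm_comb:
  assumes nrm: "is_norm nrm" and c: "c \<ge> 0"
  shows "nrm (X + c *\<^sub>R Y) \<le> nrm X + c * nrm Y" "nrm (X + (- c) *\<^sub>R Y) \<le> nrm X + c * nrm Y"
proof -
  show "nrm (X + c *\<^sub>R Y) \<le> nrm X + c * nrm Y"
    using nrm_props(4)[OF nrm, of X "c *\<^sub>R Y"] nrm_props(3)[OF nrm, of c Y] c by simp
  show "nrm (X + (- c) *\<^sub>R Y) \<le> nrm X + c * nrm Y"
    using nrm_props(4)[OF nrm, of X "(- c) *\<^sub>R Y"] nrm_props(3)[OF nrm, of "- c" Y] c by simp
qed

lemma columns:
  fixes nrm :: "real ^ 'd \<Rightarrow> real"
  assumes nrm: "is_norm nrm"
  shows "s \<ge> 1 \<Longrightarrow> \<forall>(N::nat) (T :: nat \<Rightarrow> (real ^ 'd) set). (\<forall>i\<in>{1..N}. finite (T i) \<and> card (T i) = s \<and> T i \<subseteq> {v. nrm v \<le> 1}) \<longrightarrow>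
    (\<exists>chi. (\<forall>i\<in>{1..N}. inj_on (chi i) {1..s} \<and> chi i ` {1..s} \<subseteq> T i) \<and>
       (\<forall>n\<in>{1..N}. \<forall>l\<in>{1..s}. nrm (\<Sum>i\<in>{1..n}. chi i l - (1 / real s) *\<^sub>R (\<Sum>v\<in>T i. v))
          \<le> 2 * real CARD('d) * Gf s))"
proof (induction s rule: less_induct)
  case (less s)
  show ?case
  proof (intro allI impI)
    fix N :: nat and T :: "nat \<Rightarrow> (real ^ 'd) set"
    assume T: "\<forall>i\<in>{1..N}. finite (T i) \<and> card (T i) = s \<and> T i \<subseteq> {v. nrm v \<le> 1}"
    show "\<exists>chi. (\<forall>i\<in>{1..N}. inj_on (chi i) {1..s} \<and> chi i ` {1..s} \<subseteq> T i) \<and>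
       (\<forall>n\<in>{1..N}. \<forall>l\<in>{1..s}. nrm (\<Sum>i\<in>{1..n}. chi i l - (1 / real s) *\<^sub>R (\<Sum>v\<in>T i. v))
          \<le> 2 * real CARD('d) * Gf s)"
    proof (cases "s = 1")
      case True
      define chi where "chi i l = the_elem (T i)" for i and l :: nat
      have Ti: "T i = {chi i 1}" if "i \<in> {1..N}" for i
      proof -
        have "card (T i) = 1" using T that True by auto
        then obtain t where "T i = {t}" by (auto simp: card_Suc_eq)
        then show ?thesis unfolding chi_def by simp
      qed
      have z: "(\<Sum>i\<in>{1..n}. chi i l - (1 / real s) *\<^sub>R (\<Sum>v\<in>T i. v)) = 0" if "n \<in> {1..N}" for n l
      proof (rule sum.neutral, rule ballI)
        fix i assume "i \<in> {1..n}"
        then have "i \<in> {1..N}" using that by auto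
        then have "(\<Sum>v\<in>T i. v) = chi i 1" using Ti by simp
        moreover have "chi i l = chi i 1" unfolding chi_def by simp
        ultimately show "chi i l - (1 / real s) *\<^sub>R (\<Sum>v\<in>T i. v) = 0" using True by simp
      qed
      show ?thesis
        by (rule exI[of _ chi]) (use Ti True z nrm_props(1)[OF nrm] in \<open>auto simp: chi_def Gf_def\<close>)
    next
      case False
      then have s2: "s \<ge> 2" using less.prems by simp
      define a where "a = s div 2"
      define b where "b = s - a"
      have a1: "a \<ge> 1" "a < s" and b1: "b \<ge> 1" "b < s" and ab: "a + b = s"
        using s2 unfolding a_def b_def by auto
      obtain A where A1: "\<forall>i\<in>{1..N}. A i \<subseteq> T i \<and> card (A i) = a"
        and A2: "\<forall>n\<in>{1..N}. nrm (\<Sum>i\<in>{1..n}. (\<Sum>v\<in>A i. v) - (real a / real (card (T i))) *\<^sub>R (\<Sum>v\<in>T i. v))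
          \<le> 2 * real CARD('d)"
        using subset_select[OF nrm, of N T "\<lambda>_. a"] T a1 by auto
      define B where "B i = T i - A i" for i
      have Bc: "card (B i) = b" if "i \<in> {1..N}" for i
      proof -
        have "A i \<subseteq> T i" "card (A i) = a" "finite (T i)" "card (T i) = s" using A1 T that by auto
        then show ?thesis unfolding B_def b_def by (simp add: card_Diff_subset finite_subset)
      qed
      note IHa = less.IH[OF a1(2) a1(1)]
      note IHb = less.IH[OF b1(2) b1(1)]
      have hA: "\<forall>i\<in>{1..N}. finite (A i) \<and> card (A i) = a \<and> A i \<subseteq> {v. nrm v \<le> 1}"
      proof
        fix i assume "i \<in> {1..N}"
        then have "A i \<subseteq> T i" "card (A i) = a" "finite (T i)" "T i \<subseteq> {v. nrm v \<le> 1}" using A1 T by auto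
        then show "finite (A i) \<and> card (A i) = a \<and> A i \<subseteq> {v. nrm v \<le> 1}" using finite_subset by blast
      qed
      have hB: "\<forall>i\<in>{1..N}. finite (B i) \<and> card (B i) = b \<and> B i \<subseteq> {v. nrm v \<le> 1}"
        using Bc T unfolding B_def by auto
      obtain chA where cA1: "\<forall>i\<in>{1..N}. inj_on (chA i) {1..a} \<and> chA i ` {1..a} \<subseteq> A i"
        and cA2: "\<forall>n\<in>{1..N}. \<forall>l\<in>{1..a}. nrm (\<Sum>i\<in>{1..n}. chA i l - (1 / real a) *\<^sub>R (\<Sum>v\<in>A i. v))
           \<le> 2 * real CARD('d) * Gf a"
        using IHa[THEN spec[of _ N], THEN spec[of _ A], THEN mp, OF hA] by (elim exE conjE) (rule that)
      obtain chB where cB1: "\<forall>i\<in>{1..N}. inj_on (chB i) {1..b} \<and> chB i ` {1..b} \<subseteq> B i"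
        and cB2: "\<forall>n\<in>{1..N}. \<forall>l\<in>{1..b}. nrm (\<Sum>i\<in>{1..n}. chB i l - (1 / real b) *\<^sub>R (\<Sum>v\<in>B i. v))
           \<le> 2 * real CARD('d) * Gf b"
        using IHb[THEN spec[of _ N], THEN spec[of _ B], THEN mp, OF hB] by (elim exE conjE) (rule that)
      have memA: "chA i l \<in> A i" if "i \<in> {1..N}" "l \<in> {1..a}" for i l using cA1 that by blast
      have memB: "chB i l \<in> B i" if "i \<in> {1..N}" "l \<in> {1..b}" for i l using cB1 that by blast
      define chi where "chi i l = (if l \<le> a then chA i l else chB i (l - a))" for i l
      have inj: "inj_on (chi i) {1..s} \<and> chi i ` {1..s} \<subseteq> T i" if i: "i \<in> {1..N}" for i
      proof
        show "inj_on (chi i) {1..s}"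
        proof (rule inj_onI)
          fix l l' assume l: "l \<in> {1..s}" "l' \<in> {1..s}" and eq: "chi i l = chi i l'"
          consider "l \<le> a" "l' \<le> a" | "l \<le> a" "\<not> l' \<le> a" | "\<not> l \<le> a" "l' \<le> a" | "\<not> l \<le> a" "\<not> l' \<le> a"
            by blast
          then show "l = l'"
          proof cases
            case 1
            then have "l \<in> {1..a}" "l' \<in> {1..a}" "chA i l = chA i l'" using l eq unfolding chi_def by auto
            moreover have "inj_on (chA i) {1..a}" using cA1 i by blast
            ultimately show ?thesis by (metis inj_onD)
          next
            case 2
            then have "l \<in> {1..a}" "l' - a \<in> {1..b}" using l ab by auto
            then have "chA i l \<in> A i" "chB i (l' - a) \<in> B i" using memA memB i by auto
            then show ?thesis using eq 2 unfolding chi_def B_def by auto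
          next
            case 3
            then have "l' \<in> {1..a}" "l - a \<in> {1..b}" using l ab by auto
            then have "chA i l' \<in> A i" "chB i (l - a) \<in> B i" using memA memB i by auto
            then show ?thesis using eq 3 unfolding chi_def B_def by auto
          next
            case 4
            then have "l - a \<in> {1..b}" "l' - a \<in> {1..b}" using l ab by auto
            moreover have "chB i (l - a) = chB i (l' - a)" using eq 4 unfolding chi_def by simp
            moreover have "inj_on (chB i) {1..b}" using cB1 i by blast
            ultimately have "l - a = l' - a" by (metis inj_onD)
            then show ?thesis using 4 by simp
          qed
        qed
        show "chi i ` {1..s} \<subseteq> T i"
        proof
          fix w assume "w \<in> chi i ` {1..s}"
          then obtain l where l: "l \<in> {1..s}" "w = chi i l" by auto
          show "w \<in> T i"
          proof (cases "l \<le> a")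
            case True
            then have "chA i l \<in> A i" using memA i l by auto
            then show ?thesis using l True A1 i unfolding chi_def by auto
          next
            case False
            then have "l - a \<in> {1..b}" using l ab by auto
            then have "chB i (l - a) \<in> B i" using memB i by auto
            then show ?thesis using l False unfolding chi_def B_def by auto
          qed
        qed
      qed
      define e where "e i = (\<Sum>v\<in>A i. v) - (real a / real s) *\<^sub>R (\<Sum>v\<in>T i. v)" for i
      have eb: "nrm (\<Sum>i\<in>{1..n}. e i) \<le> 2 * real CARD('d)" if n: "n \<in> {1..N}" for n
      proof -
        have "(\<Sum>i\<in>{1..n}. e i) = (\<Sum>i\<in>{1..n}. (\<Sum>v\<in>A i. v) - (real a / real (card (T i))) *\<^sub>R (\<Sum>v\<in>T i. v))"
          by (rule sum.cong[OF refl]) (use T n in \<open>auto simp: e_def\<close>)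
        then show ?thesis using A2 n by simp
      qed
      have sB: "(\<Sum>v\<in>B i. v) = (\<Sum>v\<in>T i. v) - (\<Sum>v\<in>A i. v)" if i: "i \<in> {1..N}" for i
        unfolding B_def using A1 T i by (simp add: sum_diff)
      have err: "nrm (\<Sum>i\<in>{1..n}. chi i l - (1 / real s) *\<^sub>R (\<Sum>v\<in>T i. v)) \<le> 2 * real CARD('d) * Gf s"
        if n: "n \<in> {1..N}" and l: "l \<in> {1..s}" for n l
      proof (cases "l \<le> a")
        case True
        have pw: "chi i l - (1 / real s) *\<^sub>R (\<Sum>v\<in>T i. v) = (chA i l - (1 / real a) *\<^sub>R (\<Sum>v\<in>A i. v)) + (1 / real a) *\<^sub>R e i" for i
          using True a1 unfolding chi_def e_def by (simp add: scaleR_diff_right)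
        have "(\<Sum>i\<in>{1..n}. chi i l - (1 / real s) *\<^sub>R (\<Sum>v\<in>T i. v)) =
          (\<Sum>i\<in>{1..n}. chA i l - (1 / real a) *\<^sub>R (\<Sum>v\<in>A i. v)) + (1 / real a) *\<^sub>R (\<Sum>i\<in>{1..n}. e i)"
          unfolding pw by (simp add: sum.distrib scaleR_sum_right)
        then have "nrm (\<Sum>i\<in>{1..n}. chi i l - (1 / real s) *\<^sub>R (\<Sum>v\<in>T i. v)) \<le>
          nrm (\<Sum>i\<in>{1..n}. chA i l - (1 / real a) *\<^sub>R (\<Sum>v\<in>A i. v)) + (1 / real a) * nrm (\<Sum>i\<in>{1..n}. e i)"
          by (simp only:) (rule nrm_comb(1)[OF nrm], simp)
        also have "\<dots> \<le> 2 * real CARD('d) * Gf a + (1 / real a) * (2 * real CARD('d))"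
          using cA2 n l True eb[OF n] a1 by (intro add_mono mult_left_mono) auto
        also have "\<dots> = 2 * real CARD('d) * (Gf a + 1 / real a)" by (simp add: algebra_simps)
        also have "\<dots> \<le> 2 * real CARD('d) * Gf s"
          using Gf_step[OF s2, of a] unfolding a_def by (intro mult_left_mono) auto
        finally show ?thesis .
      next
        case False
        have l': "l - a \<in> {1..b}" using l False ab by auto
        have pw: "chi i l - (1 / real s) *\<^sub>R (\<Sum>v\<in>T i. v) = (chB i (l - a) - (1 / real b) *\<^sub>R (\<Sum>v\<in>B i. v)) - (1 / real b) *\<^sub>R e i"
          if i: "i \<in> {1..N}" for i
        proof -
          have "real a / real s = 1 - real b / real s" using ab s2 by (auto simp: field_simps)
          then have "(1 / real b) *\<^sub>R e i = (1 / real b) *\<^sub>R (\<Sum>v\<in>A i. v) - (1 / real b) *\<^sub>R (\<Sum>v\<in>T i. v) + (1 / real s) *\<^sub>R (\<Sum>v\<in>T i. v)"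
            using b1 unfolding e_def by (simp add: scaleR_diff_right scaleR_diff_left)
          then show ?thesis using False sB[OF i] unfolding chi_def by (simp add: scaleR_diff_right)
        qed
        have "(\<Sum>i\<in>{1..n}. chi i l - (1 / real s) *\<^sub>R (\<Sum>v\<in>T i. v)) =
          (\<Sum>i\<in>{1..n}. chB i (l - a) - (1 / real b) *\<^sub>R (\<Sum>v\<in>B i. v)) + (- (1 / real b)) *\<^sub>R (\<Sum>i\<in>{1..n}. e i)"
        proof -
          have "(\<Sum>i\<in>{1..n}. chi i l - (1 / real s) *\<^sub>R (\<Sum>v\<in>T i. v)) =
            (\<Sum>i\<in>{1..n}. (chB i (l - a) - (1 / real b) *\<^sub>R (\<Sum>v\<in>B i. v)) + (- (1 / real b)) *\<^sub>R e i)"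
            by (rule sum.cong[OF refl]) (use pw n in auto)
          then show ?thesis by (simp add: sum.distrib scaleR_sum_right sum_subtractf sum_negf)
        qed
        then have "nrm (\<Sum>i\<in>{1..n}. chi i l - (1 / real s) *\<^sub>R (\<Sum>v\<in>T i. v)) \<le>
          nrm (\<Sum>i\<in>{1..n}. chB i (l - a) - (1 / real b) *\<^sub>R (\<Sum>v\<in>B i. v)) + (1 / real b) * nrm (\<Sum>i\<in>{1..n}. e i)"
          by (simp only:) (rule nrm_comb(2)[OF nrm], simp)
        also have "\<dots> \<le> 2 * real CARD('d) * Gf b + (1 / real b) * (2 * real CARD('d))"
          using cB2 n l' eb[OF n] b1 by (intro add_mono mult_left_mono) auto
        also have "\<dots> = 2 * real CARD('d) * (Gf b + 1 / real b)" by (simp add: algebra_simps)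
        also have "\<dots> \<le> 2 * real CARD('d) * Gf s"
          using Gf_step[OF s2, of b] unfolding b_def a_def by (intro mult_left_mono) auto
        finally show ?thesis .
      qed
      show ?thesis using inj err by blast
    qed
  qed
qed




theorem theorem4:
  fixes nrm :: "real ^ 'd \<Rightarrow> real"
    and V :: "nat \<Rightarrow> (real ^ 'd) set"
    and N r :: nat
  assumes "is_norm nrm"
    and "N \<ge> 1" and "r \<ge> 1"
    and "\<And>i. i \<in> {1..N} \<Longrightarrow> finite (V i)"
    and "\<And>i. i \<in> {1..N} \<Longrightarrow> V i \<subseteq> {v. nrm v \<le> 1}"
    and "\<And>i. i \<in> {1..N} \<Longrightarrow> card (V i) \<ge> r"
  shows "\<exists>chi. r_selection N r V chi \<and>
           (\<forall>n\<in>{1..N}. \<forall>l\<in>{1..r}.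
              nrm (\<Sum>i\<in>{1..n}. chi i l - (1 / real (card (V i))) *\<^sub>R (\<Sum>v\<in>V i. v))
                \<le> 5 * real CARD('d))"
proof -
  note nrm = assms(1)
  obtain T where T1: "\<forall>i\<in>{1..N}. T i \<subseteq> V i \<and> card (T i) = r"
    and T2: "\<forall>n\<in>{1..N}. nrm (\<Sum>i\<in>{1..n}. (\<Sum>v\<in>T i. v) - (real r / real (card (V i))) *\<^sub>R (\<Sum>v\<in>V i. v))
       \<le> 2 * real CARD('d)"
    using subset_select[OF nrm, of N V "\<lambda>_. r"] assms(4-6) by auto
  have hT: "\<forall>i\<in>{1..N}. finite (T i) \<and> card (T i) = r \<and> T i \<subseteq> {v. nrm v \<le> 1}"
  proof
    fix i assume i: "i \<in> {1..N}"
    then have "T i \<subseteq> V i" "card (T i) = r" "finite (V i)" "V i \<subseteq> {v. nrm v \<le> 1}" using T1 assms(4,5) by auto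
    then show "finite (T i) \<and> card (T i) = r \<and> T i \<subseteq> {v. nrm v \<le> 1}" using finite_subset by blast
  qed
  obtain chi where c1: "\<forall>i\<in>{1..N}. inj_on (chi i) {1..r} \<and> chi i ` {1..r} \<subseteq> T i"
    and c2: "\<forall>n\<in>{1..N}. \<forall>l\<in>{1..r}. nrm (\<Sum>i\<in>{1..n}. chi i l - (1 / real r) *\<^sub>R (\<Sum>v\<in>T i. v))
          \<le> 2 * real CARD('d) * Gf r"
    using columns[OF nrm assms(3), THEN spec[of _ N], THEN spec[of _ T], THEN mp, OF hT]
    by (elim exE conjE) (rule that)
  have rs: "r_selection N r V chi" unfolding r_selection_def
  proof
    fix i assume i: "i \<in> {1..N}"
    then show "inj_on (chi i) {1..r} \<and> chi i ` {1..r} \<subseteq> V i" using c1 T1 by blast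
  qed
  define e where "e i = (\<Sum>v\<in>T i. v) - (real r / real (card (V i))) *\<^sub>R (\<Sum>v\<in>V i. v)" for i
  have err: "nrm (\<Sum>i\<in>{1..n}. chi i l - (1 / real (card (V i))) *\<^sub>R (\<Sum>v\<in>V i. v)) \<le> 5 * real CARD('d)"
    if n: "n \<in> {1..N}" and l: "l \<in> {1..r}" for n l
  proof -
    have pw: "chi i l - (1 / real (card (V i))) *\<^sub>R (\<Sum>v\<in>V i. v) = (chi i l - (1 / real r) *\<^sub>R (\<Sum>v\<in>T i. v)) + (1 / real r) *\<^sub>R e i"
      if i: "i \<in> {1..n}" for i
    proof -
      have "card (V i) \<ge> r" using assms(6) i n by auto
      then have "card (V i) > 0" using assms(3) by linarith
      then show ?thesis using assms(3) unfolding e_def by (simp add: scaleR_diff_right)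
    qed
    have "(\<Sum>i\<in>{1..n}. chi i l - (1 / real (card (V i))) *\<^sub>R (\<Sum>v\<in>V i. v)) =
       (\<Sum>i\<in>{1..n}. chi i l - (1 / real r) *\<^sub>R (\<Sum>v\<in>T i. v)) + (1 / real r) *\<^sub>R (\<Sum>i\<in>{1..n}. e i)"
    proof -
      have "(\<Sum>i\<in>{1..n}. chi i l - (1 / real (card (V i))) *\<^sub>R (\<Sum>v\<in>V i. v)) =
        (\<Sum>i\<in>{1..n}. (chi i l - (1 / real r) *\<^sub>R (\<Sum>v\<in>T i. v)) + (1 / real r) *\<^sub>R e i)"
        by (rule sum.cong[OF refl]) (rule pw)
      then show ?thesis by (simp add: sum.distrib scaleR_sum_right)
    qed
    then have "nrm (\<Sum>i\<in>{1..n}. chi i l - (1 / real (card (V i))) *\<^sub>R (\<Sum>v\<in>V i. v)) \<le>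
      nrm (\<Sum>i\<in>{1..n}. chi i l - (1 / real r) *\<^sub>R (\<Sum>v\<in>T i. v)) + (1 / real r) * nrm (\<Sum>i\<in>{1..n}. e i)"
      by (simp only:) (rule nrm_comb(1)[OF nrm], simp)
    also have "\<dots> \<le> 2 * real CARD('d) * Gf r + (1 / real r) * (2 * real CARD('d))"
      using c2 n l T2 assms(3) unfolding e_def by (intro add_mono mult_left_mono) auto
    also have "\<dots> = 2 * real CARD('d) * (Gf r + 1 / real r)" by (simp add: algebra_simps)
    also have "\<dots> \<le> 2 * real CARD('d) * (5 / 2)"
    proof (rule mult_left_mono)
      show "Gf r + 1 / real r \<le> 5 / 2"
      proof (cases "r \<le> 2")
        case True
        then have "r = 1 \<or> r = 2" using assms(3) by auto
        then show ?thesis unfolding Gf_def by auto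
      next
        case False
        then have "Gf r = 5/2 - 5 / (2 * real r)" unfolding Gf_def by simp
        moreover have "1 / real r \<le> 5 / (2 * real r)" using False by (simp add: divide_simps)
        ultimately show ?thesis by simp
      qed
    qed simp
    finally show ?thesis by simp
  qed
  show ?thesis using rs err by blast
qed


end
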